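(* Let $k \ge 1$ be an integer, let $H$ be a graph, and let $x_1,\dots,x_k,y_1,\dots,y_k$ be $2k$ distinct vertices of $H$. If $\tau(H) \ge 4k-3$, then $H$ contains a matching $\{m_1,\dots,m_k\}$ of size $k$ such that $m_i \cap \{x_j,y_j\} = \emptyset$ for all $i \neq j$.
   Context: All graphs are finite and simple. $\tau(H)$ denotes the vertex cover number of $H$ (minimum size of a vertex set meeting every edge of $H$). Edges are regarded as 2-element vertex sets. *)

theory Defs
  imports Main
begin

definition simple_graph :: "'a set \<Rightarrow> 'a set set \<Rightarrow> bool" where
  "simple_graph V E \<longleftrightarrow> finite V \<and> (\<forall>e\<in>E. e \<subseteq> V \<and> card e = 2)"

definition vertex_cover :: "'a set \<Rightarrow> 'a set set \<Rightarrow> 'a set \<Rightarrow> bool" where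
  "vertex_cover V E C \<longleftrightarrow> C \<subseteq> V \<and> (\<forall>e\<in>E. e \<inter> C \<noteq> {})"

definition tau :: "'a set \<Rightarrow> 'a set set \<Rightarrow> nat" where
  "tau V E = (LEAST n. \<exists>C. vertex_cover V E C \<and> card C = n)"

end

theory Submission
  imports Defs
begin

lemma main_aux:
  fixes x y :: "nat \<Rightarrow> 'a"
  shows "\<And>E::'a set set. (\<forall>e\<in>E. finite e \<and> card e \<le> 2) \<Longrightarrow>
     (\<forall>C. finite C \<and> (\<forall>e\<in>E. e \<inter> C \<noteq> {}) \<longrightarrow> 4*k-3 \<le> card C) \<Longrightarrow>
     (\<exists>m :: nat \<Rightarrow> 'a set.
           (\<forall>i\<in>{1..k}. m i \<in> E)
         \<and> (\<forall>i\<in>{1..k}. \<forall>j\<in>{1..k}. i \<noteq> j \<longrightarrow> m i \<inter> m j = {})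
         \<and> (\<forall>i\<in>{1..k}. \<forall>j\<in>{1..k}. i \<noteq> j \<longrightarrow> m i \<inter> {x j, y j} = {}))"
proof (induction k)
  case 0
  then show ?case by auto
next
  case (Suc k)
  define X where "X = (\<Union>j\<in>{1..k}. {x j, y j})"
  have fX: "finite X" unfolding X_def by auto
  have cX: "card X \<le> 2*k"
  proof -
    have "card X \<le> (\<Sum>j\<in>{1..k}. card {x j, y j})" unfolding X_def by (rule card_UN_le) auto
    also have "\<dots> \<le> (\<Sum>j\<in>{1..k}. 2)" by (rule sum_mono) (simp add: card_insert_le_m1)
    finally show ?thesis by simp
  qed
  have "\<exists>e\<in>E. e \<inter> X = {}"
  proof (rule ccontr)
    assume "\<not> ?thesis"
    then have "\<forall>e\<in>E. e \<inter> X \<noteq> {}" by auto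
    with Suc.prems(2) fX have "4*Suc k - 3 \<le> card X" by blast
    with cX show False by simp
  qed
  then obtain e where eE: "e \<in> E" and eX: "e \<inter> X = {}" by blast
  define Y where "Y = e \<union> {x (Suc k), y (Suc k)}"
  define E' where "E' = {f\<in>E. f \<inter> Y = {}}"
  have fY: "finite Y" using Suc.prems(1) eE unfolding Y_def by auto
  have cY: "card Y \<le> 4"
  proof -
    have "card Y \<le> card e + card {x (Suc k), y (Suc k)}" unfolding Y_def by (rule card_Un_le)
    also have "\<dots> \<le> 2 + 2" using Suc.prems(1) eE by (intro add_mono) (auto simp: card_insert_le_m1)
    finally show ?thesis by simp
  qed
  have p1: "\<forall>e\<in>E'. finite e \<and> card e \<le> 2" using Suc.prems(1) unfolding E'_def by auto
  have p2: "\<forall>C. finite C \<and> (\<forall>e\<in>E'. e \<inter> C \<noteq> {}) \<longrightarrow> 4*k-3 \<le> card C"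
  proof (intro allI impI)
    fix C assume C: "finite C \<and> (\<forall>e\<in>E'. e \<inter> C \<noteq> {})"
    have "\<forall>f\<in>E. f \<inter> (C \<union> Y) \<noteq> {}" using C unfolding E'_def by auto
    with Suc.prems(2) C fY have "4*Suc k - 3 \<le> card (C \<union> Y)" by blast
    moreover have "card (C \<union> Y) \<le> card C + card Y" by (rule card_Un_le)
    ultimately show "4*k-3 \<le> card C" using cY by simp
  qed
  from Suc.IH[OF p1 p2] obtain m where
    m1: "\<forall>i\<in>{1..k}. m i \<in> E'" and
    m2: "\<forall>i\<in>{1..k}. \<forall>j\<in>{1..k}. i \<noteq> j \<longrightarrow> m i \<inter> m j = {}" and
    m3: "\<forall>i\<in>{1..k}. \<forall>j\<in>{1..k}. i \<noteq> j \<longrightarrow> m i \<inter> {x j, y j} = {}" by blast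
  define m' where "m' = m(Suc k := e)"
  have A: "\<forall>i\<in>{1..Suc k}. m' i \<in> E"
    using m1 eE unfolding m'_def E'_def by (auto simp: le_Suc_eq)
  have B: "\<forall>i\<in>{1..Suc k}. \<forall>j\<in>{1..Suc k}. i \<noteq> j \<longrightarrow> m' i \<inter> m' j = {}"
  proof (intro ballI impI)
    fix i j assume i: "i \<in> {1..Suc k}" and j: "j \<in> {1..Suc k}" and ij: "i \<noteq> j"
    show "m' i \<inter> m' j = {}"
    proof (cases "i = Suc k")
      case True
      then have "j \<in> {1..k}" using j ij by auto
      then show ?thesis using True m1 unfolding m'_def E'_def Y_def by auto
    next
      case False
      then have i': "i \<in> {1..k}" using i by auto
      show ?thesis
      proof (cases "j = Suc k")
        case True
        then show ?thesis using i' m1 False unfolding m'_def E'_def Y_def by auto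
      next
        case False
        then have "j \<in> {1..k}" using j by auto
        then show ?thesis using i' m2 ij False \<open>i \<noteq> Suc k\<close> unfolding m'_def by auto
      qed
    qed
  qed
  have C: "\<forall>i\<in>{1..Suc k}. \<forall>j\<in>{1..Suc k}. i \<noteq> j \<longrightarrow> m' i \<inter> {x j, y j} = {}"
  proof (intro ballI impI)
    fix i j assume i: "i \<in> {1..Suc k}" and j: "j \<in> {1..Suc k}" and ij: "i \<noteq> j"
    show "m' i \<inter> {x j, y j} = {}"
    proof (cases "i = Suc k")
      case True
      then have j': "j \<in> {1..k}" using j ij by auto
      have "{x j, y j} \<subseteq> X" using j' unfolding X_def by blast
      then show ?thesis using True eX unfolding m'_def by auto
    next
      case False
      then have i': "i \<in> {1..k}" using i by auto
      show ?thesis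
      proof (cases "j = Suc k")
        case True
        then show ?thesis using i' m1 False unfolding m'_def E'_def Y_def by auto
      next
        case False
        then have "j \<in> {1..k}" using j by auto
        then show ?thesis using i' m3 ij \<open>i \<noteq> Suc k\<close> unfolding m'_def by auto
      qed
    qed
  qed
  show ?case using A B C by blast
qed

theorem mainTheorem13:
  fixes V :: "'a set" and E :: "'a set set" and k :: nat
    and x y :: "nat \<Rightarrow> 'a"
  assumes "simple_graph V E"
    and "k \<ge> 1"
    and "\<forall>i\<in>{1..k}. x i \<in> V \<and> y i \<in> V"
    and "inj_on x {1..k}" and "inj_on y {1..k}"
    and "x ` {1..k} \<inter> y ` {1..k} = {}"
    and "tau V E \<ge> 4 * k - 3"
  shows "\<exists>m :: nat \<Rightarrow> 'a set.
           (\<forall>i\<in>{1..k}. m i \<in> E)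
         \<and> (\<forall>i\<in>{1..k}. \<forall>j\<in>{1..k}. i \<noteq> j \<longrightarrow> m i \<inter> m j = {})
         \<and> (\<forall>i\<in>{1..k}. \<forall>j\<in>{1..k}. i \<noteq> j \<longrightarrow> m i \<inter> {x j, y j} = {})"
proof (rule main_aux)
  have fV: "finite V" and EV: "\<forall>e\<in>E. e \<subseteq> V \<and> card e = 2"
    using assms(1) unfolding simple_graph_def by auto
  show "\<forall>e\<in>E. finite e \<and> card e \<le> 2"
    using EV fV by (auto intro: finite_subset)
  show "\<forall>C. finite C \<and> (\<forall>e\<in>E. e \<inter> C \<noteq> {}) \<longrightarrow> 4*k-3 \<le> card C"
  proof (intro allI impI)
    fix C assume C: "finite C \<and> (\<forall>e\<in>E. e \<inter> C \<noteq> {})"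
    have vc: "vertex_cover V E (C \<inter> V)" unfolding vertex_cover_def using C EV by blast
    have "tau V E \<le> card (C \<inter> V)" unfolding tau_def
      by (rule Least_le) (use vc in blast)
    moreover have "card (C \<inter> V) \<le> card C" using C by (intro card_mono) auto
    ultimately show "4*k-3 \<le> card C" using assms(7) by linarith
  qed
qed

end
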